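(* Let $k$ be an unramified non-archimedean local field of residue characteristic $2$ (so $e=1$ and we take $\varpi=2$). Let $B(x)=x_1^2-\Delta x_2^2$ on $k^2$, where $\Delta=1+2v$ is a unit with quadratic defect $2\mathfrak o$ and $v$ is a unit. Let $z=q^{-\beta}$, $w=zq^{-1}$, and $t\in\mathfrak o\setminus\{0\}$ with $|t|=q^{-T}$. Then \[ X^B(\beta;t^2)=|2|\,\frac{1+w^{2T+1}}{1-w}. \]
   Context: $k$ has ring of integers $\mathfrak o$, residue field of cardinality $q$, absolute value normalized by $|2|=q^{-1}$. On $\mathfrak o^n$ use the additive Haar measure of total mass $1$. For a quadratic form $B$ on $k^n$, $\rho\in\mathfrak o$ and integer $\ell\ge0$: $X_\ell^B(\rho)=\operatorname{meas}\{x\in\mathfrak o^n: B(x)-\rho\in 2^{\ell+1}\mathfrak o\}$ and $X^B(\beta;\rho)=\sum_{\ell\ge0}z^\ell X_\ell^B(\rho)$ with $z=q^{-\beta}$. The quadratic defect of $\rho\in k$ is the intersection of all ideals $b\mathfrak o$ over those $b\in k$ for which $\rho-b$ is a square in $k$. *)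

theory Defs
  imports "HOL-Analysis.Analysis"
begin

definition nonarch_abs :: "('a::field \<Rightarrow> real) \<Rightarrow> bool" where
  "nonarch_abs absv \<longleftrightarrow>
     (\<forall>x. 0 \<le> absv x) \<and> (\<forall>x. absv x = 0 \<longleftrightarrow> x = 0) \<and>
     (\<forall>x y. absv (x * y) = absv x * absv y) \<and>
     (\<forall>x y. absv (x + y) \<le> max (absv x) (absv y))"

definition int_ring :: "('a::field \<Rightarrow> real) \<Rightarrow> 'a set" where
  "int_ring absv = {x. absv x \<le> 1}"

definition ideal_gen :: "('a::field \<Rightarrow> real) \<Rightarrow> 'a \<Rightarrow> 'a set" where
  "ideal_gen absv b = {b * y | y. y \<in> int_ring absv}"

definition residue_field :: "('a::field \<Rightarrow> real) \<Rightarrow> 'a set set" where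
  "residue_field absv =
     (\<lambda>x. {y \<in> int_ring absv. absv (x - y) < 1}) ` int_ring absv"

definition abs_complete :: "('a::field \<Rightarrow> real) \<Rightarrow> bool" where
  "abs_complete absv \<longleftrightarrow>
     (\<forall>f :: nat \<Rightarrow> 'a.
        (\<forall>e>0. \<exists>N. \<forall>m\<ge>N. \<forall>n\<ge>N. absv (f m - f n) < e) \<longrightarrow>
        (\<exists>L. \<forall>e>0. \<exists>N. \<forall>n\<ge>N. absv (f n - L) < e))"

text \<open>k is a non-archimedean local field (complete, discretely valued, finite residue
  field of cardinality q), absolute value normalized so that the values of nonzero
  elements are the integral powers of q, and it is unramified of residue characteristic 2
  with uniformizer 2: |2| = 1/q.\<close>
definition unram_dyadic_local_field :: "('a::field \<Rightarrow> real) \<Rightarrow> nat \<Rightarrow> bool" where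
  "unram_dyadic_local_field absv q \<longleftrightarrow>
     nonarch_abs absv \<and> abs_complete absv \<and>
     finite (residue_field absv) \<and> card (residue_field absv) = q \<and>
     (\<forall>x. x \<noteq> 0 \<longrightarrow> (\<exists>n::int. absv x = real q powi n)) \<and>
     absv 2 = 1 / real q"

definition quad_defect :: "('a::field \<Rightarrow> real) \<Rightarrow> 'a \<Rightarrow> 'a set" where
  "quad_defect absv \<rho> = \<Inter> {ideal_gen absv b | b. \<exists>s. \<rho> - b = s ^ 2}"

definition balls2 :: "('a::field \<Rightarrow> real) \<Rightarrow> ('a \<times> 'a) set set" where
  "balls2 absv = { {y \<in> int_ring absv \<times> int_ring absv.
                     absv (fst y - fst c) \<le> r \<and> absv (snd y - snd c) \<le> r}
                 | c r. c \<in> int_ring absv \<times> int_ring absv \<and> r > 0}"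

text \<open>mu is the additive Haar measure of total mass 1 on o^2: a translation invariant
  probability measure on the Borel sigma-algebra of o^2 (generated by the balls).\<close>
definition haar_prob_o2 :: "('a::field \<Rightarrow> real) \<Rightarrow> ('a \<times> 'a) measure \<Rightarrow> bool" where
  "haar_prob_o2 absv \<mu> \<longleftrightarrow>
     space \<mu> = int_ring absv \<times> int_ring absv \<and>
     sets \<mu> = sigma_sets (int_ring absv \<times> int_ring absv) (balls2 absv) \<and>
     emeasure \<mu> (int_ring absv \<times> int_ring absv) = 1 \<and>
     (\<forall>a \<in> int_ring absv \<times> int_ring absv. \<forall>A \<in> sets \<mu>.
        emeasure \<mu> ((\<lambda>x. (fst x + fst a, snd x + snd a)) ` A) = emeasure \<mu> A)"

definition X_l :: "('a::field \<Rightarrow> real) \<Rightarrow> ('a \<times> 'a) measure \<Rightarrow> ('a \<times> 'a \<Rightarrow> 'a)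
                   \<Rightarrow> 'a \<Rightarrow> nat \<Rightarrow> real" where
  "X_l absv \<mu> B \<rho> l =
     measure \<mu> {x \<in> int_ring absv \<times> int_ring absv.
                 B x - \<rho> \<in> ideal_gen absv (2 ^ (l + 1))}"

end

theory Submission
  imports Defs
begin

locale dy =
  fixes absv :: "'a::field \<Rightarrow> real" and q :: nat and \<mu> :: "('a \<times> 'a) measure" and v :: 'a
  assumes k: "unram_dyadic_local_field absv q"
    and haar: "haar_prob_o2 absv \<mu>"
    and v_unit: "absv v = 1"
begin

definition c :: real where "c = 1 / real q"
definition dv :: "nat \<Rightarrow> 'a \<Rightarrow> bool" where "dv m x \<longleftrightarrow> absv x \<le> c ^ m"

lemma na: "nonarch_abs absv" using k unfolding unram_dyadic_local_field_def by auto
lemma a_nonneg: "0 \<le> absv x" using na unfolding nonarch_abs_def by auto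
lemma a_zero[simp]: "absv x = 0 \<longleftrightarrow> x = 0" using na unfolding nonarch_abs_def by auto
lemma a_0[simp]: "absv 0 = 0" using a_zero by blast
lemma a_mult: "absv (x * y) = absv x * absv y" using na unfolding nonarch_abs_def by auto
lemma a_ultra: "absv (x + y) \<le> max (absv x) (absv y)" using na unfolding nonarch_abs_def by auto
lemma a_one[simp]: "absv 1 = 1"
proof -
  have "absv 1 = absv 1 * absv 1" using a_mult[of 1 1] by simp
  moreover have "absv 1 \<noteq> 0" by simp
  ultimately show ?thesis by (metis mult_cancel_left2)
qed
lemma a_m1[simp]: "absv (-1) = 1"
proof -
  have "absv (-1) * absv (-1) = 1" using a_mult[of "-1" "-1"] by simp
  hence "absv (-1) ^ 2 = 1" by (simp add: power2_eq_square)
  thus ?thesis using a_nonneg[of "-1"] power2_eq_1_iff by force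
qed
lemma a_neg[simp]: "absv (- x) = absv x"
  using a_mult[of "-1" x] by simp
lemma a_sub: "absv (x - y) = absv (y - x)"
  by (metis a_neg minus_diff_eq)
lemma a_pow: "absv (x ^ n) = absv x ^ n"
  by (induction n) (auto simp: a_mult)
lemma a_div: "absv (x / y) = absv x / absv y"
proof (cases "y = 0")
  case True thus ?thesis by simp
next
  case False
  have "absv (x / y) * absv y = absv x" using a_mult[of "x/y" y] False by simp
  thus ?thesis using False by (metis a_zero nonzero_eq_divide_eq)
qed
lemma a_2: "absv 2 = c" using k unfolding unram_dyadic_local_field_def c_def by auto
lemma a_diff_le: "absv (x - y) \<le> max (absv x) (absv y)"
  using a_ultra[of x "-y"] by simp

lemma vals: "x \<noteq> 0 \<Longrightarrow> \<exists>n::int. absv x = real q powi n"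
  using k unfolding unram_dyadic_local_field_def by auto

definition Oi :: "'a set" where "Oi = {x. absv x \<le> 1}"
definition cls :: "'a \<Rightarrow> 'a set" where "cls x = {y \<in> Oi. absv (x - y) < 1}"

lemma o_int: "int_ring absv = Oi" unfolding int_ring_def Oi_def by simp
lemma rf: "residue_field absv = cls ` Oi" unfolding residue_field_def cls_def o_int by simp

lemma q_ge2: "q \<ge> 2"
proof -
  have fin: "finite (cls ` Oi)" and cq: "card (cls ` Oi) = q"
    using k unfolding unram_dyadic_local_field_def rf by auto
  have "0 \<in> Oi" "1 \<in> Oi" unfolding Oi_def by auto
  have "cls 0 \<noteq> cls 1"
  proof
    assume "cls 0 = cls 1"
    moreover have "1 \<in> cls 1" unfolding cls_def Oi_def by simp
    ultimately have "1 \<in> cls 0" by simp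
    thus False unfolding cls_def by simp
  qed
  hence "card {cls 0, cls 1} = 2" by simp
  moreover have "{cls 0, cls 1} \<subseteq> cls ` Oi" using \<open>0 \<in> Oi\<close> \<open>1 \<in> Oi\<close> by auto
  ultimately have "2 \<le> card (cls ` Oi)" using card_mono[OF fin] by metis
  thus ?thesis using cq by simp
qed

lemma c_pos: "0 < c" and c_lt1: "c < 1" using q_ge2 unfolding c_def by auto

lemma cpow: "c ^ m = real q powi (- int m)" unfolding c_def
    by (simp add: power_int_minus power_int_of_nat divide_inverse power_inverse)

lemma dv_succ: assumes "absv x < c ^ m" shows "dv (Suc m) x"
proof (cases "x = 0")
  case True thus ?thesis unfolding dv_def using c_pos by simp
next
  case False
  then obtain n where n: "absv x = real q powi n" using vals by blast
  have q1: "real q > 1" using q_ge2 by simp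
  have cm: "c ^ m = real q powi (- int m)" by (rule cpow)
  have "real q powi n < real q powi (- int m)" using assms n cm by simp
  hence "n < - int m"
  proof -
    assume h: "real q powi n < real q powi (- int m)"
    show ?thesis
    proof (rule ccontr)
      assume "\<not> n < - int m"
      hence "real q powi (- int m) \<le> real q powi n" using q1 by (intro power_int_increasing) auto
      thus False using h by simp
    qed
  qed
  hence "n \<le> - int (Suc m)" by simp
  hence "real q powi n \<le> real q powi (- int (Suc m))" using q1 by (simp add: power_int_increasing)
  moreover have "c ^ Suc m = real q powi (- int (Suc m))" by (rule cpow)
  ultimately show ?thesis unfolding dv_def using n by simp
qed


lemma two_nz[simp]: "(2::'a) \<noteq> 0"
proof
  assume "(2::'a) = 0" hence "absv (2::'a) = 0" by simp
  thus False using a_2 c_pos by simp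
qed
lemma a_pow2: "absv ((2::'a) ^ k) = c ^ k" by (simp add: a_pow a_2)
lemma dv_0_iff: "dv 0 x \<longleftrightarrow> x \<in> Oi" unfolding dv_def Oi_def by simp
lemma dv_zero[simp]: "dv m 0" unfolding dv_def using c_pos by simp
lemma dv_add: "dv m x \<Longrightarrow> dv m y \<Longrightarrow> dv m (x + y)"
  unfolding dv_def using a_ultra[of x y] by simp
lemma dv_neg: "dv m (- x) \<longleftrightarrow> dv m x" unfolding dv_def by simp
lemma dv_diff: "dv m x \<Longrightarrow> dv m y \<Longrightarrow> dv m (x - y)"
  using dv_add[of m x "-y"] dv_neg by simp
lemma dv_mono: assumes "m \<le> n" "dv n x" shows "dv m x"
proof -
  have "c^n \<le> c^m" by (rule power_decreasing) (use c_pos c_lt1 assms in auto)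
  thus ?thesis using assms unfolding dv_def by linarith
qed
lemma dv_mul: "dv m x \<Longrightarrow> dv n y \<Longrightarrow> dv (m + n) (x * y)"
  unfolding dv_def a_mult power_add using c_pos by (intro mult_mono) (auto simp: a_nonneg)
lemma dv_mul0: "dv m x \<Longrightarrow> dv 0 y \<Longrightarrow> dv m (x * y)"
  using dv_mul[of m x 0 y] by simp
lemma dv_mul0': "dv 0 x \<Longrightarrow> dv m y \<Longrightarrow> dv m (x * y)"
  using dv_mul[of 0 x m y] by simp
lemma dv_2pow: "dv (k + m) (2 ^ k * y) \<longleftrightarrow> dv m y"
  unfolding dv_def a_mult a_pow2 power_add using c_pos by simp
lemma dv_2pow0: "dv 0 y \<Longrightarrow> dv k (2 ^ k * y)"
  using dv_2pow[of k 0 y] by simp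
lemma dv_ex: "dv m x \<Longrightarrow> \<exists>y. dv 0 y \<and> x = 2 ^ m * y"
proof -
  assume h: "dv m x"
  have nz: "(2::'a) ^ m \<noteq> 0" by simp
  have "dv (m + 0) (2 ^ m * (x / 2 ^ m))" using h nz by simp
  hence "dv 0 (x / 2 ^ m)" using dv_2pow by blast
  thus ?thesis using nz by (intro exI[of _ "x / 2^m"]) simp
qed
lemma dv1_lt: "dv 1 x \<longleftrightarrow> absv x < 1"
  using dv_succ[of x 0] c_lt1 unfolding dv_def by auto
lemma unit_abs: "dv 0 x \<Longrightarrow> \<not> dv 1 x \<Longrightarrow> absv x = 1"
  using dv1_lt unfolding dv_def by auto
lemma unit_not_dv1: "absv x = 1 \<Longrightarrow> \<not> dv 1 x" using dv1_lt by simp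
lemma unit_dv0: "absv x = 1 \<Longrightarrow> dv 0 x" unfolding dv_def by simp
lemma dv_unit_mul: "absv u = 1 \<Longrightarrow> dv m (u * x) \<longleftrightarrow> dv m x"
  unfolding dv_def by (simp add: a_mult)
lemma dv_prime: assumes "dv 0 x" "dv 0 y" "dv 1 (x * y)" shows "dv 1 x \<or> dv 1 y"
proof (cases "dv 1 x")
  case False
  hence "absv x = 1" using unit_abs assms by blast
  hence "dv 1 y" using dv_unit_mul[of x 1 y] assms by simp
  thus ?thesis by simp
qed simp
lemma dv_sqdiff: assumes "dv 0 a" "dv 0 b" "dv 1 (a^2 - b^2)" shows "dv 1 (a - b)"
proof -
  have e: "(a - b)^2 = (a^2 - b^2) - 2 * b * (a - b)" by (simp add: power2_eq_square algebra_simps)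
  have "dv 0 (b * (a - b))" using dv_mul0' assms dv_diff by blast
  hence "dv (1 + 0) (2 ^ 1 * (b * (a - b)))" using dv_2pow by blast
  hence "dv 1 (2 * b * (a - b))" by (simp add: mult.assoc)
  hence "dv 1 ((a - b)^2)" using e assms dv_diff by metis
  hence "dv 1 ((a - b) * (a - b))" by (simp add: power2_eq_square)
  thus ?thesis using dv_prime assms dv_diff by blast
qed

lemma cls_mem: "x \<in> Oi \<Longrightarrow> y \<in> Oi \<Longrightarrow> y \<in> cls x \<longleftrightarrow> dv 1 (x - y)"
  unfolding cls_def dv1_lt by simp
lemma cls_eq: assumes "x \<in> Oi" "y \<in> Oi" shows "cls x = cls y \<longleftrightarrow> dv 1 (x - y)"
proof
  assume h: "cls x = cls y"
  have "y \<in> cls y" using assms cls_mem by simp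
  hence "y \<in> cls x" using h by simp
  thus "dv 1 (x - y)" using cls_mem[OF assms] by simp
next
  assume h: "dv 1 (x - y)"
  show "cls x = cls y"
  proof (intro set_eqI iffI)
    fix z assume "z \<in> cls x"
    hence z: "z \<in> Oi" "dv 1 (x - z)" using cls_def assms cls_mem by auto
    hence "dv 1 (y - z)" using dv_diff[OF z(2) h] by simp
    thus "z \<in> cls y" using z assms cls_mem by simp
  next
    fix z assume "z \<in> cls y"
    hence z: "z \<in> Oi" "dv 1 (y - z)" using cls_def assms cls_mem by auto
    hence "dv 1 (x - z)" using dv_add[OF z(2) h] by simp
    thus "z \<in> cls x" using z assms cls_mem by simp
  qed
qed

lemma resid: "\<exists>R. finite R \<and> card R = q \<and> R \<subseteq> Oi \<and> (\<forall>x\<in>Oi. \<exists>r\<in>R. dv 1 (x - r))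
   \<and> (\<forall>r\<in>R. \<forall>r'\<in>R. dv 1 (r - r') \<longrightarrow> r = r')"
proof -
  have fin: "finite (cls ` Oi)" and cq: "card (cls ` Oi) = q"
    using k unfolding unram_dyadic_local_field_def rf by auto
  define pk where "pk = (\<lambda>C::'a set. SOME y. y \<in> C)"
  have pkx: "pk (cls x) \<in> cls x" if "x \<in> Oi" for x
  proof -
    have "x \<in> cls x" using cls_mem[OF that that] by simp
    thus ?thesis unfolding pk_def by (rule someI)
  qed
  have pko: "pk (cls x) \<in> Oi" if "x \<in> Oi" for x using pkx[OF that] unfolding cls_def by blast
  have pkd: "dv 1 (x - pk (cls x))" if "x \<in> Oi" for x
    using cls_mem[OF that pko[OF that]] pkx[OF that] by simp
  have inj: "inj_on pk (cls ` Oi)"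
  proof (rule inj_onI)
    fix A B assume A: "A \<in> cls ` Oi" and B: "B \<in> cls ` Oi" and AB: "pk A = pk B"
    obtain x where x: "x \<in> Oi" "A = cls x" using A by blast
    obtain y where y: "y \<in> Oi" "B = cls y" using B by blast
    have e: "pk (cls x) = pk (cls y)" using AB x y by simp
    have "(x - pk (cls x)) - (y - pk (cls y)) = x - y" unfolding e by (simp add: algebra_simps)
    hence "dv 1 (x - y)" using dv_diff[OF pkd[OF x(1)] pkd[OF y(1)]] by simp
    thus "A = B" using cls_eq[OF x(1) y(1)] x y by simp
  qed
  define R where "R = pk ` cls ` Oi"
  have R1: "finite R" unfolding R_def using fin by simp
  have R2: "card R = q" unfolding R_def using card_image[OF inj] cq by simp
  have R3: "R \<subseteq> Oi" unfolding R_def using pko by blast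
  have R4: "\<forall>x\<in>Oi. \<exists>r\<in>R. dv 1 (x - r)"
  proof
    fix x assume "x \<in> Oi"
    hence "pk (cls x) \<in> R" "dv 1 (x - pk (cls x))" unfolding R_def using pkd by auto
    thus "\<exists>r\<in>R. dv 1 (x - r)" by blast
  qed
  have R5: "\<forall>r\<in>R. \<forall>r'\<in>R. dv 1 (r - r') \<longrightarrow> r = r'"
  proof (intro ballI impI)
    fix r r' assume r: "r \<in> R" and r': "r' \<in> R" and rr: "dv 1 (r - r')"
    obtain x where x: "x \<in> Oi" "r = pk (cls x)" using r unfolding R_def by blast
    obtain y where y: "y \<in> Oi" "r' = pk (cls y)" using r' unfolding R_def by blast
    have e: "x - y = ((x - r) + (r - r')) - (y - r')" by (simp add: algebra_simps)
    have a1: "dv 1 (x - r)" using pkd[OF x(1)] x(2) by simp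
    have a2: "dv 1 (y - r')" using pkd[OF y(1)] y(2) by simp
    have "dv 1 (x - y)" unfolding e using dv_diff[OF dv_add[OF a1 rr] a2] .
    hence "cls x = cls y" using cls_eq[OF x(1) y(1)] by simp
    thus "r = r'" using x y by simp
  qed
  show ?thesis using R1 R2 R3 R4 R5 by blast
qed

end

locale dyR = dy +
  fixes R :: "'a set"
  assumes R_fin: "finite R" and R_card: "card R = q" and R_sub: "R \<subseteq> Oi"
    and R_comp: "\<And>x. x \<in> Oi \<Longrightarrow> \<exists>r\<in>R. dv 1 (x - r)"
    and R_dist: "\<And>r r'. r \<in> R \<Longrightarrow> r' \<in> R \<Longrightarrow> dv 1 (r - r') \<Longrightarrow> r = r'"
begin

lemma R_unique: assumes "absv w = 1" "dv 0 g"
  shows "card {b \<in> R. dv 1 (g + w * b)} = 1"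
proof -
  have w0: "w \<noteq> 0" using assms by auto
  have "dv 0 (- g / w)" using assms unfolding dv_def a_div a_neg by simp
  then obtain r where r: "r \<in> R" "dv 1 (- g / w - r)" using R_comp dv_0_iff by blast
  have e: "g + w * r = (- w) * (- g / w - r)" using w0 by (simp add: field_simps)
  have "absv (- w) = 1" using assms by simp
  hence rr: "dv 1 (g + w * r)" unfolding e using r(2) dv_unit_mul by blast
  have "{b \<in> R. dv 1 (g + w * b)} = {r}"
  proof (intro set_eqI iffI)
    fix b assume "b \<in> {b \<in> R. dv 1 (g + w * b)}"
    hence b: "b \<in> R" "dv 1 (g + w * b)" by auto
    have e2: "w * (b - r) = (g + w * b) - (g + w * r)" by (simp add: algebra_simps)
    have "dv 1 (w * (b - r))" unfolding e2 using dv_diff[OF b(2) rr] .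
    hence "dv 1 (b - r)" using dv_unit_mul assms by blast
    thus "b \<in> {r}" using R_dist b r by simp
  next
    fix b assume "b \<in> {r}"
    thus "b \<in> {b \<in> R. dv 1 (g + w * b)}" using r rr by simp
  qed
  thus ?thesis by simp
qed

lemma Rep: "\<exists>F. finite F \<and> F \<subseteq> Oi \<and> (\<forall>x\<in>Oi. \<exists>f\<in>F. dv m (x - f))"
proof (induction m)
  case 0
  show ?case by (rule exI[of _ "{0}"]) (auto simp: dv_0_iff Oi_def)
next
  case (Suc m)
  then obtain F where F: "finite F" "F \<subseteq> Oi" "\<forall>x\<in>Oi. \<exists>f\<in>F. dv m (x - f)" by blast
  define G where "G = (\<lambda>(r, f). r + 2 * f) ` (R \<times> F)"
  have "finite G" unfolding G_def using F R_fin by simp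
  moreover have "G \<subseteq> Oi"
  proof
    fix g assume "g \<in> G"
    then obtain r f where "r \<in> R" "f \<in> F" "g = r + 2 * f" unfolding G_def by auto
    hence "dv 0 r" "dv 0 f" using R_sub F(2) dv_0_iff by auto
    hence "dv 1 (2 ^ 1 * f)" using dv_2pow0 by blast
    hence "dv 0 (2 * f)" using dv_mono[of 0 1] by simp
    thus "g \<in> Oi" using \<open>dv 0 r\<close> \<open>g = r + 2 * f\<close> dv_add dv_0_iff by blast
  qed
  moreover have "\<forall>x\<in>Oi. \<exists>g\<in>G. dv (Suc m) (x - g)"
  proof
    fix x assume x: "x \<in> Oi"
    then obtain r where r: "r \<in> R" "dv 1 (x - r)" using R_comp by blast
    then obtain y where y: "dv 0 y" "x - r = 2 ^ 1 * y" using dv_ex by blast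
    then obtain f where f: "f \<in> F" "dv m (y - f)" using F(3) dv_0_iff by blast
    have eq: "x - (r + 2 * f) = 2 ^ 1 * (y - f)" using y by (simp add: algebra_simps)
    have "dv (1 + m) (2 ^ 1 * (y - f))" using dv_2pow f(2) by blast
    hence "dv (1 + m) (x - (r + 2 * f))" unfolding eq .
    moreover have "r + 2 * f \<in> G" unfolding G_def using r f by auto
    ultimately show "\<exists>g\<in>G. dv (Suc m) (x - g)" by auto
  qed
  ultimately show ?case by blast
qed

end

context dyR begin

definition Om :: "('a \<times> 'a) set" where "Om = Oi \<times> Oi"
definition per :: "nat \<Rightarrow> ('a \<times> 'a) set \<Rightarrow> bool" where
  "per m A \<longleftrightarrow> A \<subseteq> Om \<and> (\<forall>x\<in>A. \<forall>y\<in>Om. dv m (fst y - fst x) \<and> dv m (snd y - snd x) \<longrightarrow> y \<in> A)"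
definition tr :: "nat \<Rightarrow> 'a \<times> 'a \<Rightarrow> 'a \<times> 'a \<Rightarrow> 'a \<times> 'a" where
  "tr m x p = (fst x + 2 ^ m * fst p, snd x + 2 ^ m * snd p)"

lemma Om_iff: "x \<in> Om \<longleftrightarrow> dv 0 (fst x) \<and> dv 0 (snd x)"
  unfolding Om_def dv_0_iff by (cases x) simp
lemma Om_iff': "x \<in> Om \<longleftrightarrow> fst x \<in> Oi \<and> snd x \<in> Oi"
  unfolding Om_def by (cases x) simp

lemma Om_o: "int_ring absv \<times> int_ring absv = Om" unfolding Om_def o_int ..
lemma hh: "space \<mu> = Om \<and> sets \<mu> = sigma_sets Om (balls2 absv) \<and> emeasure \<mu> Om = 1 \<and>
     (\<forall>a \<in> Om. \<forall>A \<in> sets \<mu>. emeasure \<mu> ((\<lambda>x. (fst x + fst a, snd x + snd a)) ` A) = emeasure \<mu> A)"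
  using haar unfolding haar_prob_o2_def Om_o .
lemma sp: "space \<mu> = Om" using hh by blast
lemma st: "sets \<mu> = sigma_sets Om (balls2 absv)" using hh by blast
lemma tot: "emeasure \<mu> Om = 1" using hh by blast
lemma trinv: "a \<in> Om \<Longrightarrow> A \<in> sets \<mu> \<Longrightarrow>
   emeasure \<mu> ((\<lambda>x. (fst x + fst a, snd x + snd a)) ` A) = emeasure \<mu> A"
  using hh by blast
lemma fm: "finite_measure \<mu>" by (rule finite_measureI) (simp add: sp tot)
lemma em: "emeasure \<mu> A = ennreal (measure \<mu> A)" using finite_measure.emeasure_eq_measure[OF fm] .
lemma tot': "measure \<mu> Om = 1" using tot em by (metis ennreal_eq_1 measure_nonneg)

lemma dv_sym: "dv m (x - y) \<longleftrightarrow> dv m (y - x)" unfolding dv_def using a_sub by simp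

lemma pow2_o: "dv 0 ((2::'a) ^ m)" unfolding dv_def a_pow2 using c_pos c_lt1 by (simp add: power_le_one)

lemma ball_meas: assumes "f \<in> Om"
  shows "{y \<in> Om. dv m (fst y - fst f) \<and> dv m (snd y - snd f)} \<in> sets \<mu>"
proof -
  have "{y \<in> Om. dv m (fst y - fst f) \<and> dv m (snd y - snd f)} \<in> balls2 absv"
    unfolding balls2_def dv_def Om_def[symmetric] o_int
    using assms c_pos by (intro CollectI exI[of _ f] exI[of _ "c^m"]) (auto simp: Om_def)
  thus ?thesis unfolding st by (rule sigma_sets.Basic)
qed

lemma per_meas: assumes "per m A" shows "A \<in> sets \<mu>"
proof -
  obtain F where F: "finite F" "F \<subseteq> Oi" "\<forall>x\<in>Oi. \<exists>f\<in>F. dv m (x - f)" using Rep[of m] by (elim exE conjE)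
  define bl where "bl = (\<lambda>f. {y \<in> Om. dv m (fst y - fst f) \<and> dv m (snd y - snd f)})"
  have AO: "A \<subseteq> Om" using assms unfolding per_def by (rule conjunct1)
  have P: "\<And>x y. x \<in> A \<Longrightarrow> y \<in> Om \<Longrightarrow> dv m (fst y - fst x) \<Longrightarrow> dv m (snd y - snd x) \<Longrightarrow> y \<in> A"
    using assms unfolding per_def by blast
  have eqA: "A = (\<Union>f\<in>(F \<times> F) \<inter> A. bl f)"
  proof (intro set_eqI iffI)
    fix x assume x: "x \<in> A"
    hence "x \<in> Om" using AO by blast
    hence xo: "fst x \<in> Oi" "snd x \<in> Oi" unfolding Om_iff' by simp_all
    obtain f1 where f1: "f1 \<in> F" "dv m (fst x - f1)" using F(3) xo by blast
    obtain f2 where f2: "f2 \<in> F" "dv m (snd x - f2)" using F(3) xo by blast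
    have fo: "(f1, f2) \<in> Om" using f1 f2 F(2) unfolding Om_iff' by auto
    have "dv m (f1 - fst x)" "dv m (f2 - snd x)" using f1 f2 dv_sym by blast+
    hence "(f1, f2) \<in> A" using P[OF x fo] by simp
    moreover have "x \<in> Om" using x AO by blast
    hence "x \<in> bl (f1, f2)" unfolding bl_def using f1 f2 by simp
    ultimately show "x \<in> (\<Union>f\<in>(F \<times> F) \<inter> A. bl f)" using f1 f2 by blast
  next
    fix x assume "x \<in> (\<Union>f\<in>(F \<times> F) \<inter> A. bl f)"
    then obtain f where f: "f \<in> A" "x \<in> bl f" by blast
    thus "x \<in> A" using P[OF f(1)] unfolding bl_def by blast
  qed
  have "(\<Union>f\<in>(F \<times> F) \<inter> A. bl f) \<in> sets \<mu>"
  proof (rule sets.finite_UN)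
    show "finite ((F \<times> F) \<inter> A)" using F(1) by simp
    fix f assume "f \<in> (F \<times> F) \<inter> A"
    hence "f \<in> Om" using AO by blast
    thus "bl f \<in> sets \<mu>" unfolding bl_def by (rule ball_meas)
  qed
  thus ?thesis using eqA[symmetric] by (rule back_subst)
qed

end

context dyR begin

lemma avg:
  assumes pA: "per m A" and pC: "per m' C" and CA: "C \<subseteq> A" and J: "finite J"
    and g: "\<And>j. j \<in> J \<Longrightarrow> g j \<in> Om"
    and cnt: "\<And>x. x \<in> A \<Longrightarrow> card {j \<in> J. tr m x (g j) \<in> C} = kk"
  shows "real (card J) * measure \<mu> C = real kk * measure \<mu> A"
proof -
  define Cj where "Cj = (\<lambda>j. {x \<in> Om. tr m x (g j) \<in> C})"
  have AO: "A \<subseteq> Om" using pA unfolding per_def by (rule conjunct1)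
  have CO: "C \<subseteq> Om" using pC unfolding per_def by (rule conjunct1)
  have Cm: "C \<in> sets \<mu>" using per_meas[OF pC] .
  have Am: "A \<in> sets \<mu>" using per_meas[OF pA] .
  have trO: "tr m x (g j) \<in> Om" if "x \<in> Om" "j \<in> J" for x j
  proof -
    have "dv 0 (fst (g j))" "dv 0 (snd (g j))" using g[OF that(2)] unfolding Om_iff by auto
    hence "dv 0 (2 ^ m * fst (g j))" "dv 0 (2 ^ m * snd (g j))" by (simp_all add: dv_mul0'[OF pow2_o])
    moreover have "dv 0 (fst x)" "dv 0 (snd x)" using that(1) unfolding Om_iff by auto
    ultimately have "dv 0 (fst x + 2 ^ m * fst (g j))" "dv 0 (snd x + 2 ^ m * snd (g j))"
      using dv_add by simp_all
    thus ?thesis unfolding tr_def Om_iff by simp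
  qed
  have dvm: "dv m (2 ^ m * y)" if "y \<in> Oi" for y using dv_2pow0 that dv_0_iff by blast
  have Cj_img: "Cj j = (\<lambda>x. (fst x + fst a, snd x + snd a)) ` C"
    if "j \<in> J" and a: "a = (- (2 ^ m * fst (g j)), - (2 ^ m * snd (g j)))" for j a
  proof (intro set_eqI iffI)
    fix x assume "x \<in> Cj j"
    hence x: "x \<in> Om" "tr m x (g j) \<in> C" unfolding Cj_def by auto
    have "x = (\<lambda>x. (fst x + fst a, snd x + snd a)) (tr m x (g j))" unfolding a tr_def by simp
    thus "x \<in> (\<lambda>x. (fst x + fst a, snd x + snd a)) ` C" using x(2) by blast
  next
    fix x assume "x \<in> (\<lambda>x. (fst x + fst a, snd x + snd a)) ` C"
    then obtain y where y: "y \<in> C" "x = (fst y + fst a, snd y + snd a)" by blast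
    have "tr m x (g j) = y" unfolding y(2) a tr_def by simp
    moreover have "x \<in> Om"
    proof -
      have "dv 0 (fst (g j))" "dv 0 (snd (g j))" using g[OF that(1)] unfolding Om_iff by auto
      hence "dv 0 (2 ^ m * fst (g j))" "dv 0 (2 ^ m * snd (g j))" by (simp_all add: dv_mul0'[OF pow2_o])
      moreover have "y \<in> Om" using y(1) CO by blast
      hence "dv 0 (fst y)" "dv 0 (snd y)" unfolding Om_iff by simp_all
      ultimately show ?thesis unfolding y(2) a Om_iff using dv_diff by simp
    qed
    ultimately show "x \<in> Cj j" unfolding Cj_def using y(1) by simp
  qed
  have aO: "(- (2 ^ m * fst (g j)), - (2 ^ m * snd (g j))) \<in> Om" if "j \<in> J" for j
  proof -
    have "dv 0 (fst (g j))" "dv 0 (snd (g j))" using g[OF that] unfolding Om_iff by auto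
    hence "dv 0 (2 ^ m * fst (g j))" "dv 0 (2 ^ m * snd (g j))" by (simp_all add: dv_mul0'[OF pow2_o])
    thus ?thesis unfolding Om_iff using dv_neg by simp
  qed
  have meq: "measure \<mu> (Cj j) = measure \<mu> C" if "j \<in> J" for j
  proof -
    have "emeasure \<mu> (Cj j) = emeasure \<mu> C"
      using Cj_img[OF that refl] trinv[OF aO[OF that] Cm] by simp
    thus ?thesis unfolding measure_def by simp
  qed
  have Cjm: "Cj j \<in> sets \<mu>" if "j \<in> J" for j
  proof -
    have "per m' (Cj j)" unfolding per_def
    proof (intro conjI ballI impI)
      show "Cj j \<subseteq> Om" unfolding Cj_def by auto
      fix x y assume x: "x \<in> Cj j" and y: "y \<in> Om" and d: "dv m' (fst y - fst x) \<and> dv m' (snd y - snd x)"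
      have "tr m y (g j) \<in> Om" using trO y that by blast
      moreover have "dv m' (fst (tr m y (g j)) - fst (tr m x (g j)))" "dv m' (snd (tr m y (g j)) - snd (tr m x (g j)))"
        using d unfolding tr_def by simp_all
      ultimately have "tr m y (g j) \<in> C" using pC x unfolding per_def Cj_def by blast
      thus "y \<in> Cj j" unfolding Cj_def using y by simp
    qed
    thus ?thesis using per_meas by blast
  qed
  have CjA: "Cj j \<subseteq> A" if "j \<in> J" for j
  proof
    fix x assume "x \<in> Cj j"
    hence x: "x \<in> Om" "tr m x (g j) \<in> C" unfolding Cj_def by auto
    have go: "fst (g j) \<in> Oi" "snd (g j) \<in> Oi" using g[OF that] unfolding Om_iff' by auto
    have "dv m (fst x - fst (tr m x (g j)))" "dv m (snd x - snd (tr m x (g j)))"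
      unfolding tr_def using dvm[OF go(1)] dvm[OF go(2)] dv_neg by simp_all
    thus "x \<in> A" using pA x CA unfolding per_def by blast
  qed
  have ind: "(\<Sum>j\<in>J. indicator (Cj j) x) = real kk * indicator A x" for x :: "'a \<times> 'a"
  proof (cases "x \<in> A")
    case True
    have "(\<Sum>j\<in>J. indicator (Cj j) x :: real) = real (card {j \<in> J. x \<in> Cj j})"
      using J by (simp add: indicator_def sum.If_cases Int_def conj_commute)
    also have "{j \<in> J. x \<in> Cj j} = {j \<in> J. tr m x (g j) \<in> C}" unfolding Cj_def using True AO by auto
    finally show ?thesis using cnt[OF True] True by simp
  next
    case False
    hence "\<forall>j\<in>J. x \<notin> Cj j" using CjA by blast
    thus ?thesis using False by simp
  qed
  have ii: "integrable \<mu> (indicator (Cj j) :: _ \<Rightarrow> real)" if "j \<in> J" for j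
    using Cjm[OF that] em by (simp add: less_top[symmetric])
  have "(\<Sum>j\<in>J. measure \<mu> (Cj j)) = (\<Sum>j\<in>J. integral\<^sup>L \<mu> (indicator (Cj j)))"
    using Cjm sets.sets_into_space by (intro sum.cong) (auto simp: Int_absorb2)
  also have "\<dots> = integral\<^sup>L \<mu> (\<lambda>x. \<Sum>j\<in>J. indicator (Cj j) x)"
    using ii by simp
  also have "\<dots> = integral\<^sup>L \<mu> (\<lambda>x. real kk * indicator A x)" using ind by simp
  also have "\<dots> = real kk * measure \<mu> A"
    using Am sets.sets_into_space by (simp add: Int_absorb2)
  finally show ?thesis using meq by simp
qed

end

context dyR begin

definition Bq :: "'a \<times> 'a \<Rightarrow> 'a" where "Bq x = fst x ^ 2 - (1 + 2 * v) * snd x ^ 2"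
definition Ss :: "'a \<Rightarrow> nat \<Rightarrow> ('a \<times> 'a) set" where "Ss \<tau> n = {x \<in> Om. dv n (Bq x - \<tau> ^ 2)}"
definition sc :: "nat \<Rightarrow> ('a \<times> 'a) set \<Rightarrow> ('a \<times> 'a) set" where
  "sc j D = (\<lambda>x. (2 ^ j * fst x, 2 ^ j * snd x)) ` D"

lemma v0: "dv 0 v" using v_unit unit_dv0 by blast
lemma dv0_mul: "dv 0 x \<Longrightarrow> dv 0 y \<Longrightarrow> dv 0 (x * y)" using dv_mul[of 0 x 0 y] by simp
lemma dv0_pow: "dv 0 x \<Longrightarrow> dv 0 (x ^ n)"
proof (induction n)
  case 0 show ?case unfolding dv_def by simp
next
  case (Suc n) thus ?case using dv0_mul by simp
qed
lemma dv0_2: "dv 0 (2::'a)" using pow2_o[of 1] by simp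
lemma dv1_2: "dv 1 (2 * y)" if "dv 0 y" using dv_2pow0[OF that, of 1] by simp
lemma dv2_4: "dv 2 (4 * y)" if "dv 0 y" using dv_2pow0[OF that, of 2] by simp
lemma dv_2mul: "dv (Suc m) (2 * y) \<longleftrightarrow> dv m y" using dv_2pow[of 1 m y] by simp
lemma dv2_2mul: "dv 2 (2 * y) \<longleftrightarrow> dv 1 y" using dv_2pow[of 1 1 y] by (simp add: numeral_2_eq_2)
lemma dv1_2mul: "dv 1 (2 * y) \<longleftrightarrow> dv 0 y" using dv_2pow[of 1 0 y] by simp
lemma dv_4mul: "dv (Suc (Suc m)) (4 * y) \<longleftrightarrow> dv m y" using dv_2pow[of 2 m y] by simp

lemma Bq_o: "x \<in> Om \<Longrightarrow> dv 0 (Bq x)"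
  unfolding Bq_def Om_iff using v0 dv0_2
  by (intro dv_diff dv0_pow dv0_mul dv_add) (auto simp: dv_def)

lemma Bq_dv2: assumes "x \<in> Om" "dv 2 (Bq x)" shows "dv 1 (fst x) \<and> dv 1 (snd x)"
proof -
  obtain x1 x2 where x: "x = (x1, x2)" by (cases x)
  have o: "dv 0 x1" "dv 0 x2" using assms(1) unfolding x Om_iff by auto
  define d where "d = x1 - x2"
  have d0: "dv 0 d" unfolding d_def using o dv_diff by blast
  have e1: "Bq x = d * d + 2 * (d * x2 - v * (x2 * x2))" unfolding x Bq_def d_def
    by (simp add: algebra_simps power2_eq_square)
  have r0: "dv 0 (d * x2 - v * (x2 * x2))" using d0 o v0 by (intro dv_diff dv0_mul)
  have h1: "dv 1 (Bq x)" by (rule dv_mono[of 1 2]) (simp_all add: assms)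
  have "d * d = Bq x - 2 * (d * x2 - v * (x2 * x2))" unfolding e1 by simp
  hence "dv 1 (d * d)" using dv_diff[OF h1 dv1_2[OF r0]] by simp
  hence dd: "dv 1 d" using dv_prime[OF d0 d0] by blast
  then obtain e where e: "dv 0 e" "d = 2 ^ 1 * e" using dv_ex by blast
  have e2: "Bq x = 4 * (e * e + e * x2) - 2 * (v * (x2 * x2))" unfolding e1 e(2)
    by (simp add: algebra_simps)
  have h4: "dv 2 (4 * (e * e + e * x2))" using e o by (intro dv2_4 dv_add dv0_mul)
  have "2 * (v * (x2 * x2)) = 4 * (e * e + e * x2) - Bq x" unfolding e2 by simp
  hence "dv 2 (2 * (v * (x2 * x2)))" using dv_diff[OF h4 assms(2)] by simp
  hence "dv 1 (v * (x2 * x2))" using dv2_2mul by simp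
  hence "dv 1 (x2 * x2)" using dv_unit_mul v_unit by blast
  hence s1: "dv 1 x2" using dv_prime[OF o(2) o(2)] by blast
  have "x1 = d + x2" unfolding d_def by simp
  hence "dv 1 x1" using dd s1 dv_add by simp
  thus ?thesis using s1 x by simp
qed


lemma Bq_d: "Bq (x1, x2) = (x1 - x2) * (x1 - x2) + 2 * ((x1 - x2) * x2 - v * (x2 * x2))"
  unfolding Bq_def by (simp add: algebra_simps power2_eq_square)

lemma Ss1_char: assumes "x \<in> Om" "dv 0 \<tau>"
  shows "dv 1 (Bq x - \<tau> ^ 2) \<longleftrightarrow> dv 1 (fst x - snd x - \<tau>)"
proof -
  obtain x1 x2 where x: "x = (x1, x2)" by (cases x)
  have o: "dv 0 x1" "dv 0 x2" using assms(1) unfolding x Om_iff by auto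
  define d where "d = x1 - x2"
  have d0: "dv 0 d" unfolding d_def using o dv_diff by blast
  have r0: "dv 0 (d * x2 - v * (x2 * x2))" using d0 o v0 by (intro dv_diff dv0_mul)
  have e: "Bq x - \<tau> ^ 2 = (d - \<tau>) * (d + \<tau>) + 2 * (d * x2 - v * (x2 * x2))"
    unfolding x Bq_d d_def by (simp add: algebra_simps power2_eq_square)
  have r1: "dv 1 (2 * (d * x2 - v * (x2 * x2)))" using dv1_2[OF r0] .
  show ?thesis
  proof
    assume h: "dv 1 (Bq x - \<tau> ^ 2)"
    have eq: "(Bq x - \<tau> ^ 2) - 2 * (d * x2 - v * (x2 * x2)) = d ^ 2 - \<tau> ^ 2"
      unfolding e by (simp add: algebra_simps power2_eq_square)
    have "dv 1 ((Bq x - \<tau> ^ 2) - 2 * (d * x2 - v * (x2 * x2)))" using dv_diff[OF h r1] .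
    hence "dv 1 (d ^ 2 - \<tau> ^ 2)" by (simp only: eq)
    hence "dv 1 (d - \<tau>)" using dv_sqdiff d0 assms(2) by blast
    thus "dv 1 (fst x - snd x - \<tau>)" unfolding x d_def by simp
  next
    assume "dv 1 (fst x - snd x - \<tau>)"
    hence "dv 1 (d - \<tau>)" unfolding x d_def by simp
    hence "dv 1 ((d - \<tau>) * (d + \<tau>))" using d0 assms(2) dv_mul0 dv_add by blast
    thus "dv 1 (Bq x - \<tau> ^ 2)" unfolding e using r1 dv_add by blast
  qed
qed

lemma Ss2_char: assumes "x \<in> Om" "absv u = 1"
  shows "dv 2 (Bq x - u ^ 2) \<longleftrightarrow> dv 1 (fst x - snd x - u) \<and> (dv 1 (snd x) \<or> dv 1 (v * snd x - u))"
proof -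
  obtain x1 x2 where x: "x = (x1, x2)" by (cases x)
  have o: "dv 0 x1" "dv 0 x2" using assms(1) unfolding x Om_iff by auto
  have u0: "dv 0 u" using assms(2) unit_dv0 by blast
  define d where "d = x1 - x2"
  have d0: "dv 0 d" unfolding d_def using o dv_diff by blast
  have key: "dv 2 (Bq x - u ^ 2) \<longleftrightarrow> dv 1 (x2 * (d - v * x2))" if du0: "dv 1 (d - u)"
  proof -
    obtain e where e: "dv 0 e" "d - u = 2 ^ 1 * e" using dv_ex[OF du0] by blast
    have eq: "Bq x - u ^ 2 = 4 * (u * e + e * e) + 2 * (x2 * (d - v * x2))"
    proof -
      have "d = u + 2 * e" using e(2) by (simp add: algebra_simps)
      thus ?thesis unfolding x Bq_d d_def[symmetric] by (simp add: algebra_simps power2_eq_square)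
    qed
    have f: "dv 2 (4 * (u * e + e * e))" using u0 e(1) by (intro dv2_4 dv_add dv0_mul)
    show ?thesis
    proof
      assume hh: "dv 2 (Bq x - u ^ 2)"
      have "dv 2 ((Bq x - u ^ 2) - 4 * (u * e + e * e))" using dv_diff[OF hh f] .
      hence "dv 2 (2 * (x2 * (d - v * x2)))" unfolding eq by simp
      thus "dv 1 (x2 * (d - v * x2))" using dv2_2mul by blast
    next
      assume "dv 1 (x2 * (d - v * x2))"
      hence "dv 2 (2 * (x2 * (d - v * x2)))" using dv2_2mul by blast
      thus "dv 2 (Bq x - u ^ 2)" unfolding eq using f dv_add by blast
    qed
  qed
  have dvs: "dv 0 (d - v * x2)" using d0 o v0 by (intro dv_diff dv0_mul)
  have c1: "dv 2 (Bq x - u ^ 2) \<Longrightarrow> dv 1 (d - u)"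
  proof -
    assume "dv 2 (Bq x - u ^ 2)"
    hence "dv 1 (Bq x - u ^ 2)" using dv_mono[of 1 2] by simp
    thus "dv 1 (d - u)" using Ss1_char[OF assms(1) u0] unfolding x d_def by simp
  qed
  have alt: "dv 1 (d - v * x2) \<longleftrightarrow> dv 1 (v * x2 - u)" if "dv 1 (d - u)"
  proof
    assume "dv 1 (d - v * x2)"
    thus "dv 1 (v * x2 - u)" using dv_diff[OF that \<open>dv 1 (d - v * x2)\<close>] by simp
  next
    assume h: "dv 1 (v * x2 - u)"
    have "d - v * x2 = (d - u) - (v * x2 - u)" by simp
    thus "dv 1 (d - v * x2)" using dv_diff[OF that h] by simp
  qed
  show ?thesis
  proof
    assume h: "dv 2 (Bq x - u ^ 2)"
    have du: "dv 1 (d - u)" using c1 h .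
    hence "dv 1 (x2 * (d - v * x2))" using key h by blast
    hence "dv 1 x2 \<or> dv 1 (d - v * x2)" using dv_prime[OF o(2) dvs] by blast
    thus "dv 1 (fst x - snd x - u) \<and> (dv 1 (snd x) \<or> dv 1 (v * snd x - u))"
      using du alt[OF du] unfolding x d_def by auto
  next
    assume h: "dv 1 (fst x - snd x - u) \<and> (dv 1 (snd x) \<or> dv 1 (v * snd x - u))"
    hence du: "dv 1 (d - u)" unfolding x d_def by simp
    have "dv 1 x2 \<or> dv 1 (d - v * x2)" using h alt[OF du] unfolding x by auto
    hence "dv 1 (x2 * (d - v * x2))" using dv_mul0 dv_mul0' o(2) dvs by blast
    thus "dv 2 (Bq x - u ^ 2)" using key[OF du] by blast
  qed
qed


lemma Ss_Om: "Ss \<tau> n \<subseteq> Om" unfolding Ss_def by auto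
lemma Ss0: "dv 0 \<tau> \<Longrightarrow> Ss \<tau> 0 = Om"
  unfolding Ss_def using Bq_o dv0_pow dv_diff by blast
lemma Ss_mono: "n \<le> n' \<Longrightarrow> Ss \<tau> n' \<subseteq> Ss \<tau> n"
  unfolding Ss_def using dv_mono by blast

lemma sq_diff_dv: assumes "dv m e" "dv 0 x" "n \<le> m + 1" "n \<le> 2 * m"
  shows "dv n (e * (2 * x + e))"
proof -
  have a: "dv (m + 1) (e * (2 * x))" using dv_mul[OF assms(1) dv1_2[OF assms(2)]] .
  have b: "dv (m + m) (e * e)" using dv_mul[OF assms(1) assms(1)] .
  have "e * (2 * x + e) = e * (2 * x) + e * e" by (simp add: algebra_simps)
  moreover have "dv n (e * (2 * x))" using dv_mono[OF assms(3) a] .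
  moreover have "dv n (e * e)" using dv_mono[OF _ b] assms(4) by simp
  ultimately show ?thesis using dv_add by simp
qed

lemma per_Ss: assumes "n \<le> m + 1" "n \<le> 2 * m" "dv 0 \<tau>" shows "per m (Ss \<tau> n)"
  unfolding per_def
proof (intro conjI ballI impI)
  show "Ss \<tau> n \<subseteq> Om" by (rule Ss_Om)
  fix x y assume x: "x \<in> Ss \<tau> n" and y: "y \<in> Om" and d: "dv m (fst y - fst x) \<and> dv m (snd y - snd x)"
  have xo: "x \<in> Om" and hx: "dv n (Bq x - \<tau> ^ 2)" using x unfolding Ss_def by auto
  have o: "dv 0 (fst x)" "dv 0 (snd x)" using xo unfolding Om_iff by auto
  have eq: "Bq y - \<tau> ^ 2 = (Bq x - \<tau> ^ 2) + (fst y - fst x) * (2 * fst x + (fst y - fst x))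
      - (1 + 2 * v) * ((snd y - snd x) * (2 * snd x + (snd y - snd x)))"
    unfolding Bq_def by (simp add: algebra_simps power2_eq_square)
  have t1: "dv n ((fst y - fst x) * (2 * fst x + (fst y - fst x)))"
    using sq_diff_dv d o(1) assms by blast
  have t2: "dv n ((snd y - snd x) * (2 * snd x + (snd y - snd x)))"
    using sq_diff_dv d o(2) assms by blast
  have dD: "dv 0 (1 + 2 * v)" using v0 dv0_2 by (intro dv_add dv0_mul) (auto simp: dv_def)
  have "dv n (Bq y - \<tau> ^ 2)" unfolding eq using dv_diff[OF dv_add[OF hx t1] dv_mul0'[OF dD t2]] .
  thus "y \<in> Ss \<tau> n" unfolding Ss_def using y by simp
qed

lemma sc_mem: "x \<in> sc j D \<longleftrightarrow> (\<exists>y\<in>D. x = (2 ^ j * fst y, 2 ^ j * snd y))"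
  unfolding sc_def by auto
lemma sc_inj: "(2 ^ j * a, 2 ^ j * b) \<in> sc j D \<longleftrightarrow> (a, b) \<in> D"
proof
  assume "(2 ^ j * a, 2 ^ j * b) \<in> sc j D"
  then obtain y where y: "y \<in> D" "(2 ^ j * a, 2 ^ j * b) = (2 ^ j * fst y, 2 ^ j * snd y)"
    unfolding sc_mem by blast
  hence "a = fst y" "b = snd y" by auto
  thus "(a, b) \<in> D" using y(1) by simp
next
  assume "(a, b) \<in> D"
  thus "(2 ^ j * a, 2 ^ j * b) \<in> sc j D" unfolding sc_mem by force
qed
lemma sc_sc: "sc j (sc 1 D) = sc (Suc j) D"
  unfolding sc_def image_image by (simp add: mult_ac)

lemma per_sc: assumes "per m D" shows "per (m + j) (sc j D)"
  unfolding per_def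
proof (intro conjI ballI impI)
  have DO: "D \<subseteq> Om" using assms unfolding per_def by (rule conjunct1)
  have P: "\<And>x y. x \<in> D \<Longrightarrow> y \<in> Om \<Longrightarrow> dv m (fst y - fst x) \<Longrightarrow> dv m (snd y - snd x) \<Longrightarrow> y \<in> D"
    using assms unfolding per_def by blast
  show "sc j D \<subseteq> Om"
  proof
    fix x assume "x \<in> sc j D"
    then obtain y where y: "y \<in> D" "x = (2 ^ j * fst y, 2 ^ j * snd y)" unfolding sc_mem by blast
    have "y \<in> Om" using y(1) DO by blast
    hence "dv 0 (fst y)" "dv 0 (snd y)" unfolding Om_iff by auto
    thus "x \<in> Om" unfolding y(2) Om_iff using dv_mul0'[OF pow2_o] by simp
  qed
  fix x y assume x: "x \<in> sc j D" and y: "y \<in> Om" and d: "dv (m + j) (fst y - fst x) \<and> dv (m + j) (snd y - snd x)"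
  obtain z where z: "z \<in> D" "x = (2 ^ j * fst z, 2 ^ j * snd z)" using x unfolding sc_mem by blast
  have zo: "z \<in> Om" using z(1) DO by blast
  have zo2: "dv 0 (fst z)" "dv 0 (snd z)" using zo unfolding Om_iff by auto
  have yo: "dv 0 (fst y)" "dv 0 (snd y)" using y unfolding Om_iff by auto
  have gen: "\<exists>w. dv 0 w \<and> a = 2 ^ j * w \<and> dv m (w - b)" if "dv (m + j) (a - 2 ^ j * b)" "dv 0 b" for a b
  proof -
    have "dv j (a - 2 ^ j * b)" using dv_mono[OF _ that(1)] by simp
    moreover have "dv j (2 ^ j * b)" using dv_2pow0[OF that(2)] .
    ultimately have "dv j a" using dv_add by fastforce
    then obtain w where w: "dv 0 w" "a = 2 ^ j * w" using dv_ex by blast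
    have "a - 2 ^ j * b = 2 ^ j * (w - b)" unfolding w(2) by (simp add: algebra_simps)
    hence "dv (j + m) (2 ^ j * (w - b))" using that(1) by (simp add: add.commute)
    hence "dv m (w - b)" using dv_2pow by blast
    thus ?thesis using w by blast
  qed
  obtain w1 where w1: "dv 0 w1" "fst y = 2 ^ j * w1" "dv m (w1 - fst z)"
    using gen[of "fst y" "fst z"] d z(2) zo2 by auto
  obtain w2 where w2: "dv 0 w2" "snd y = 2 ^ j * w2" "dv m (w2 - snd z)"
    using gen[of "snd y" "snd z"] d z(2) zo2 by auto
  have "(w1, w2) \<in> Om" unfolding Om_iff using w1 w2 by simp
  hence "(w1, w2) \<in> D" using P[OF z(1)] w1 w2 by simp
  hence "(2 ^ j * w1, 2 ^ j * w2) \<in> sc j D" using sc_inj by blast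
  moreover have "y = (2 ^ j * w1, 2 ^ j * w2)" using w1 w2 by (cases y) simp
  ultimately show "y \<in> sc j D" by simp
qed

lemma Ss_scale1: assumes "dv 0 \<sigma>" shows "Ss (2 * \<sigma>) (n + 2) = sc 1 (Ss \<sigma> n)"
proof (intro set_eqI iffI)
  fix x assume "x \<in> Ss (2 * \<sigma>) (n + 2)"
  hence xo: "x \<in> Om" and h: "dv (n + 2) (Bq x - (2 * \<sigma>) ^ 2)" unfolding Ss_def by auto
  have "dv 2 (Bq x - (2 * \<sigma>) ^ 2)" using dv_mono[OF _ h] by simp
  moreover have "dv 2 ((2 * \<sigma>) ^ 2)"
  proof -
    have "(2 * \<sigma>) ^ 2 = 4 * (\<sigma> * \<sigma>)" by (simp add: power2_eq_square)
    moreover have "dv 2 (4 * (\<sigma> * \<sigma>))" using dv2_4[OF dv0_mul[OF assms assms]] .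
    ultimately show ?thesis by (simp only:)
  qed
  ultimately have "dv 2 (Bq x)" using dv_add by fastforce
  hence "dv 1 (fst x) \<and> dv 1 (snd x)" using Bq_dv2 xo by blast
  then obtain y1 y2 where y: "dv 0 y1" "fst x = 2 ^ 1 * y1" "dv 0 y2" "snd x = 2 ^ 1 * y2"
    using dv_ex by meson
  have xe: "x = (2 ^ 1 * y1, 2 ^ 1 * y2)" using y by (cases x) simp
  have eq: "Bq x - (2 * \<sigma>) ^ 2 = 4 * (Bq (y1, y2) - \<sigma> ^ 2)"
    unfolding xe Bq_def by (simp add: algebra_simps power2_eq_square)
  have h': "dv (Suc (Suc n)) (4 * (Bq (y1, y2) - \<sigma> ^ 2))" using h unfolding eq by (simp add: add.commute)
  have "dv n (Bq (y1, y2) - \<sigma> ^ 2)" using dv_4mul h' by blast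
  hence "(y1, y2) \<in> Ss \<sigma> n" unfolding Ss_def Om_iff using y by simp
  thus "x \<in> sc 1 (Ss \<sigma> n)" unfolding xe using sc_inj by blast
next
  fix x assume "x \<in> sc 1 (Ss \<sigma> n)"
  then obtain y where y: "y \<in> Ss \<sigma> n" "x = (2 ^ 1 * fst y, 2 ^ 1 * snd y)" unfolding sc_mem by blast
  have yo: "y \<in> Om" and h: "dv n (Bq y - \<sigma> ^ 2)" using y(1) unfolding Ss_def by auto
  have o: "dv 0 (fst y)" "dv 0 (snd y)" using yo unfolding Om_iff by auto
  have xo: "x \<in> Om" unfolding y(2) Om_iff using o dv0_mul dv0_2 by simp
  have eq: "Bq x - (2 * \<sigma>) ^ 2 = 4 * (Bq y - \<sigma> ^ 2)"
    unfolding y(2) Bq_def by (simp add: algebra_simps power2_eq_square)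
  have "dv (Suc (Suc n)) (4 * (Bq y - \<sigma> ^ 2))" using h dv_4mul by blast
  hence "dv (n + 2) (Bq x - (2 * \<sigma>) ^ 2)" unfolding eq by (simp add: add.commute)
  thus "x \<in> Ss (2 * \<sigma>) (n + 2)" unfolding Ss_def using xo by simp
qed

lemma Ss_scale: "dv 0 \<sigma> \<Longrightarrow> Ss (2 ^ j * \<sigma>) (n + 2 * j) = sc j (Ss \<sigma> n)"
proof (induction j arbitrary: n \<sigma>)
  case 0
  show ?case unfolding sc_def by simp
next
  case (Suc j)
  have s2: "dv 0 (2 * \<sigma>)" using Suc.prems dv0_mul dv0_2 by blast
  have "Ss (2 ^ Suc j * \<sigma>) (n + 2 * Suc j) = Ss (2 ^ j * (2 * \<sigma>)) ((n + 2) + 2 * j)"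
    by (simp add: algebra_simps)
  also have "\<dots> = sc j (Ss (2 * \<sigma>) (n + 2))" using Suc.IH[OF s2] .
  also have "\<dots> = sc j (sc 1 (Ss \<sigma> n))" using Ss_scale1[OF Suc.prems] by simp
  also have "\<dots> = sc (Suc j) (Ss \<sigma> n)" by (rule sc_sc)
  finally show ?case .
qed

end

context dyR begin

lemma per_Om: "per 0 Om" unfolding per_def by simp
lemma sc0: "sc 0 D = D" unfolding sc_def by simp

lemma avg_sc:
  assumes pA: "per m A" and pC: "per m' C" and CA: "C \<subseteq> A" and J: "finite J"
    and g: "\<And>i. i \<in> J \<Longrightarrow> g i \<in> Om"
    and cnt: "\<And>x. x \<in> A \<Longrightarrow> card {i \<in> J. tr m x (g i) \<in> C} = kk"
  shows "real (card J) * measure \<mu> (sc j C) = real kk * measure \<mu> (sc j A)"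
proof (rule avg[OF per_sc[OF pA] per_sc[OF pC] _ J g])
  show "sc j C \<subseteq> sc j A" unfolding sc_def using CA by blast
next
  fix x assume "x \<in> sc j A"
  then obtain y where y: "y \<in> A" "x = (2 ^ j * fst y, 2 ^ j * snd y)" unfolding sc_mem by blast
  have "tr (m + j) x (g i) = (2 ^ j * fst (tr m y (g i)), 2 ^ j * snd (tr m y (g i)))" for i
    unfolding y(2) tr_def by (simp add: power_add algebra_simps)
  hence "{i \<in> J. tr (m + j) x (g i) \<in> sc j C} = {i \<in> J. tr m y (g i) \<in> C}"
    using sc_inj[of j "fst (tr m y (g _))" "snd (tr m y (g _))" C] by simp
  thus "card {i \<in> J. tr (m + j) x (g i) \<in> sc j C} = kk" using cnt[OF y(1)] by simp
qed simp

lemma card_prod: "card {p \<in> R \<times> R. P (fst p) \<and> Q (snd p)} = card {a \<in> R. P a} * card {b \<in> R. Q b}"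
proof -
  have "{p \<in> R \<times> R. P (fst p) \<and> Q (snd p)} = {a \<in> R. P a} \<times> {b \<in> R. Q b}" by auto
  thus ?thesis by (simp add: card_cartesian_product)
qed

lemma card_each: assumes "\<And>a. a \<in> R \<Longrightarrow> card {b \<in> R. P a b} = 1"
  shows "card {p \<in> R \<times> R. P (fst p) (snd p)} = q"
proof -
  have "{p \<in> R \<times> R. P (fst p) (snd p)} = Sigma R (\<lambda>a. {b \<in> R. P a b})" by auto
  hence "card {p \<in> R \<times> R. P (fst p) (snd p)} = (\<Sum>a\<in>R. card {b \<in> R. P a b})"
    using R_fin by (simp add: card_SigmaI)
  also have "\<dots> = (\<Sum>a\<in>R. 1)" using assms by simp
  finally show ?thesis using R_card by simp
qed

lemma R_unique1: "dv 0 g \<Longrightarrow> card {b \<in> R. dv 1 (g + b)} = 1"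
  using R_unique[of 1 g] by simp

lemma RO: "b \<in> R \<Longrightarrow> dv 0 b" using R_sub dv_0_iff by blast

lemma sc1_Om: "y \<in> sc 1 Om \<longleftrightarrow> y \<in> Om \<and> dv 1 (fst y) \<and> dv 1 (snd y)"
proof
  assume "y \<in> sc 1 Om"
  then obtain z where z: "z \<in> Om" "y = (2 ^ 1 * fst z, 2 ^ 1 * snd z)" unfolding sc_mem by blast
  have o: "dv 0 (fst z)" "dv 0 (snd z)" using z(1) unfolding Om_iff by auto
  show "y \<in> Om \<and> dv 1 (fst y) \<and> dv 1 (snd y)"
    unfolding z(2) Om_iff using o dv1_2 dv0_mul[OF dv0_2] by simp
next
  assume h: "y \<in> Om \<and> dv 1 (fst y) \<and> dv 1 (snd y)"
  then obtain y1 y2 where "dv 0 y1" "fst y = 2 ^ 1 * y1" "dv 0 y2" "snd y = 2 ^ 1 * y2"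
    using dv_ex by meson
  moreover hence "y = (2 ^ 1 * y1, 2 ^ 1 * y2)" by (cases y) simp
  ultimately show "y \<in> sc 1 Om" using sc_inj[of 1 y1 y2 Om] unfolding Om_iff by simp
qed

lemma M_ball: "measure \<mu> (sc j Om) = c ^ (2 * j)"
proof (induction j)
  case 0 show ?case using tot' sc0 by simp
next
  case (Suc j)
  have pC: "per 1 (sc 1 Om)" using per_sc[OF per_Om, of 1] by simp
  have CA: "sc 1 Om \<subseteq> Om" using sc1_Om by blast
  have "real (card (R \<times> R)) * measure \<mu> (sc j (sc 1 Om)) = real 1 * measure \<mu> (sc j Om)"
  proof (rule avg_sc[OF per_Om pC CA])
    show "finite (R \<times> R)" using R_fin by simp
    fix i assume "i \<in> R \<times> R" thus "id i \<in> Om" unfolding Om_iff using RO by auto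
  next
    fix x assume x: "x \<in> Om"
    have o: "dv 0 (fst x)" "dv 0 (snd x)" using x unfolding Om_iff by auto
    have "{i \<in> R \<times> R. tr 0 x (id i) \<in> sc 1 Om} = {p \<in> R \<times> R. dv 1 (fst x + fst p) \<and> dv 1 (snd x + snd p)}"
      unfolding sc1_Om tr_def Om_iff using o RO dv_add by auto
    thus "card {i \<in> R \<times> R. tr 0 x (id i) \<in> sc 1 Om} = 1"
      using card_prod[of "\<lambda>a. dv 1 (fst x + a)" "\<lambda>b. dv 1 (snd x + b)"] R_unique1 o by simp
  qed
  hence "real q ^ 2 * measure \<mu> (sc (Suc j) Om) = c ^ (2 * j)"
    using Suc.IH R_card R_fin sc_sc by (simp add: card_cartesian_product power2_eq_square)
  thus ?case using q_ge2 unfolding c_def by (simp add: field_simps power_mult_distrib power_add power2_eq_square)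
qed


lemma RR_fin: "finite (R \<times> R)" using R_fin by simp
lemma RR_card: "card (R \<times> R) = q * q" using R_card R_fin by (simp add: card_cartesian_product)

lemma M_S1: assumes "dv 0 \<tau>" shows "measure \<mu> (sc j (Ss \<tau> 1)) = c ^ (2 * j + 1)"
proof -
  have pC: "per 1 (Ss \<tau> 1)" using per_Ss[OF _ _ assms] by simp
  have "real (card (R \<times> R)) * measure \<mu> (sc j (Ss \<tau> 1)) = real q * measure \<mu> (sc j Om)"
  proof (rule avg_sc[OF per_Om pC Ss_Om RR_fin])
    fix i assume "i \<in> R \<times> R" thus "(\<lambda>p. (fst p, 0)) i \<in> Om" unfolding Om_iff using RO by auto
  next
    fix x assume x: "x \<in> Om"
    have o: "dv 0 (fst x)" "dv 0 (snd x)" using x unfolding Om_iff by auto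
    have "tr 0 x ((\<lambda>p. (fst p, 0)) p) \<in> Ss \<tau> 1 \<longleftrightarrow> dv 1 ((fst x - snd x - \<tau>) + fst p)"
      if "p \<in> R \<times> R" for p
    proof -
      have po: "tr 0 x ((\<lambda>p. (fst p, 0)) p) \<in> Om" unfolding tr_def Om_iff using o that RO dv_add by auto
      have c1: "tr 0 x ((\<lambda>p. (fst p, 0)) p) \<in> Ss \<tau> 1 \<longleftrightarrow>
          dv 1 (fst (tr 0 x ((\<lambda>p. (fst p, 0)) p)) - snd (tr 0 x ((\<lambda>p. (fst p, 0)) p)) - \<tau>)"
        unfolding Ss_def using Ss1_char[OF po assms] po by simp
      have e: "fst (tr 0 x ((\<lambda>p. (fst p, 0)) p)) - snd (tr 0 x ((\<lambda>p. (fst p, 0)) p)) - \<tau>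
          = (fst x - snd x - \<tau>) + fst p" by (simp add: tr_def)
      show ?thesis by (simp only: c1 e)
    qed
    hence "{i \<in> R \<times> R. tr 0 x ((\<lambda>p. (fst p, 0)) i) \<in> Ss \<tau> 1}
        = {p \<in> R \<times> R. dv 1 ((fst x - snd x - \<tau>) + fst p) \<and> True}" by auto
    moreover have "dv 0 (fst x - snd x - \<tau>)" using o assms dv_diff by blast
    ultimately show "card {i \<in> R \<times> R. tr 0 x ((\<lambda>p. (fst p, 0)) i) \<in> Ss \<tau> 1} = q"
      using card_prod[of "\<lambda>a. dv 1 ((fst x - snd x - \<tau>) + a)" "\<lambda>b. True"] R_unique1 R_card by simp
  qed
  hence "real q * real q * measure \<mu> (sc j (Ss \<tau> 1)) = real q * c ^ (2 * j)"
    using RR_card M_ball by simp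
  thus ?thesis using q_ge2 unfolding c_def by (simp add: field_simps power_add)
qed

lemma M_S2: assumes "absv u = 1" shows "measure \<mu> (sc j (Ss u 2)) = 2 * c ^ (2 * j + 2)"
proof -
  have u0: "dv 0 u" using assms unit_dv0 by blast
  have pC: "per 1 (Ss u 2)" using per_Ss[OF _ _ u0] by simp
  define g where "g = (\<lambda>p::'a \<times> 'a. (fst p + snd p, snd p))"
  have "real (card (R \<times> R)) * measure \<mu> (sc j (Ss u 2)) = real 2 * measure \<mu> (sc j Om)"
  proof (rule avg_sc[OF per_Om pC Ss_Om RR_fin])
    fix i assume "i \<in> R \<times> R" thus "g i \<in> Om" unfolding Om_iff g_def using RO dv_add by auto
  next
    fix x assume x: "x \<in> Om"
    have o: "dv 0 (fst x)" "dv 0 (snd x)" using x unfolding Om_iff by auto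
    have "tr 0 x (g p) \<in> Ss u 2 \<longleftrightarrow> dv 1 ((fst x - snd x - u) + fst p) \<and>
        (dv 1 (snd x + snd p) \<or> dv 1 ((v * snd x - u) + v * snd p))"
      if "p \<in> R \<times> R" for p
    proof -
      have po: "tr 0 x (g p) \<in> Om" unfolding tr_def Om_iff g_def using o that RO dv_add by auto
      have c1: "tr 0 x (g p) \<in> Ss u 2 \<longleftrightarrow> dv 1 (fst (tr 0 x (g p)) - snd (tr 0 x (g p)) - u) \<and>
          (dv 1 (snd (tr 0 x (g p))) \<or> dv 1 (v * snd (tr 0 x (g p)) - u))"
        unfolding Ss_def using Ss2_char[OF po assms] po by simp
      have e1: "fst (tr 0 x (g p)) - snd (tr 0 x (g p)) - u = (fst x - snd x - u) + fst p"
        by (simp add: tr_def g_def)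
      have e2: "v * snd (tr 0 x (g p)) - u = (v * snd x - u) + v * snd p"
        by (simp add: tr_def g_def algebra_simps)
      have e3: "snd (tr 0 x (g p)) = snd x + snd p" by (simp add: tr_def g_def)
      show ?thesis unfolding c1 unfolding e1 e2 unfolding e3 ..
    qed
    hence "{i \<in> R \<times> R. tr 0 x (g i) \<in> Ss u 2}
        = {p \<in> R \<times> R. dv 1 ((fst x - snd x - u) + fst p) \<and>
            (dv 1 (snd x + snd p) \<or> dv 1 ((v * snd x - u) + v * snd p))}" by auto
    moreover have "dv 0 (fst x - snd x - u)" using o u0 dv_diff by blast
    moreover have "card {b \<in> R. dv 1 (snd x + b) \<or> dv 1 ((v * snd x - u) + v * b)} = 2"
    proof -
      have g2: "dv 0 (v * snd x - u)" using o u0 v0 dv_diff dv0_mul by blast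
      have "{b \<in> R. dv 1 (snd x + b) \<or> dv 1 ((v * snd x - u) + v * b)}
          = {b \<in> R. dv 1 (snd x + b)} \<union> {b \<in> R. dv 1 ((v * snd x - u) + v * b)}" by auto
      moreover have "{b \<in> R. dv 1 (snd x + b)} \<inter> {b \<in> R. dv 1 ((v * snd x - u) + v * b)} = {}"
      proof (rule ccontr)
        assume "\<not> ?thesis"
        then obtain b where b: "dv 1 (snd x + b)" "dv 1 ((v * snd x - u) + v * b)" by auto
        have "dv 1 (v * (snd x + b))" using dv_mul0'[OF v0 b(1)] .
        moreover have "u = v * (snd x + b) - ((v * snd x - u) + v * b)" by (simp add: algebra_simps)
        ultimately have "dv 1 u" using dv_diff[OF _ b(2)] by metis
        thus False using unit_not_dv1[OF assms] by simp
      qed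
      ultimately show ?thesis using R_fin R_unique1[OF o(2)] R_unique[OF v_unit g2]
        by (simp add: card_Un_disjoint)
    qed
    ultimately show "card {i \<in> R \<times> R. tr 0 x (g i) \<in> Ss u 2} = 2"
      using card_prod[of "\<lambda>a. dv 1 ((fst x - snd x - u) + a)"
          "\<lambda>b. dv 1 (snd x + b) \<or> dv 1 ((v * snd x - u) + v * b)"] R_unique1 by simp
  qed
  hence "real q * real q * measure \<mu> (sc j (Ss u 2)) = 2 * c ^ (2 * j)"
    using RR_card M_ball by simp
  thus ?thesis using q_ge2 unfolding c_def by (simp add: field_simps power_add)
qed


lemma iden: fixes x1 x2 a b Q \<alpha> u :: 'a
  assumes "x1 ^ 2 - (1 + 2 * v) * x2 ^ 2 - u ^ 2 = 4 * Q * \<alpha>"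
  shows "(x1 + 2 * Q * (a + b)) ^ 2 - (1 + 2 * v) * (x2 + 2 * Q * b) ^ 2 - u ^ 2
    = 4 * Q * ((\<alpha> + x1 * a + Q * a ^ 2) + (x1 - (1 + 2 * v) * x2) * b + 2 * Q * (a * b - v * b ^ 2))"
proof -
  have "(x1 + 2 * Q * (a + b)) ^ 2 - (1 + 2 * v) * (x2 + 2 * Q * b) ^ 2 - u ^ 2
    = (x1 ^ 2 - (1 + 2 * v) * x2 ^ 2 - u ^ 2) + 4 * Q * (x1 * a + Q * a ^ 2 + (x1 - (1 + 2 * v) * x2) * b + 2 * Q * (a * b - v * b ^ 2))"
    by (simp add: algebra_simps power2_eq_square)
  also have "\<dots> = 4 * Q * ((\<alpha> + x1 * a + Q * a ^ 2) + (x1 - (1 + 2 * v) * x2) * b + 2 * Q * (a * b - v * b ^ 2))"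
    unfolding assms by (simp add: algebra_simps)
  finally show ?thesis .
qed

lemma step_core: assumes x: "x \<in> Om" and h: "dv (k + 2) (Bq x - u ^ 2)" and u: "absv u = 1" and a: "dv 0 a"
  obtains \<gamma> w where "dv 0 \<gamma>" "absv w = 1"
    "\<And>b. dv 0 b \<Longrightarrow> dv (k + 3) (Bq (tr (k + 1) x (a + b, b)) - u ^ 2) \<longleftrightarrow> dv 1 (\<gamma> + w * b)"
proof -
  obtain x1 x2 where xe: "x = (x1, x2)" by (cases x)
  have o: "dv 0 x1" "dv 0 x2" using x unfolding xe Om_iff by auto
  have u0: "dv 0 u" using u unit_dv0 by blast
  define Q :: 'a where "Q = 2 ^ k"
  have Q0: "dv 0 Q" unfolding Q_def using pow2_o .
  obtain \<alpha> where al: "dv 0 \<alpha>" "Bq x - u ^ 2 = 2 ^ (k + 2) * \<alpha>" using dv_ex[OF h] by blast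
  have p2: "(2::'a) ^ (k + 2) = 4 * Q" unfolding Q_def by (simp add: power_add)
  have p1: "(2::'a) ^ (k + 1) = 2 * Q" unfolding Q_def by (simp add: power_add)
  have hyp: "x1 ^ 2 - (1 + 2 * v) * x2 ^ 2 - u ^ 2 = 4 * Q * \<alpha>" using al(2) unfolding xe Bq_def p2 by simp
  define \<gamma> where "\<gamma> = \<alpha> + x1 * a + Q * a ^ 2"
  define w where "w = x1 - (1 + 2 * v) * x2"
  have g0: "dv 0 \<gamma>" unfolding \<gamma>_def using al(1) o a Q0
    by (intro dv_add dv0_mul dv0_pow)
  have d1: "dv 1 (x1 - x2 - u)"
  proof -
    have "dv 1 (Bq x - u ^ 2)" using dv_mono[OF _ h] by simp
    thus ?thesis using Ss1_char[OF x u0] unfolding xe by simp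
  qed
  have w1: "absv w = 1"
  proof -
    have w0: "dv 0 w" unfolding w_def using o v0 dv0_2 by (intro dv_diff dv0_mul dv_add) (auto simp: dv_def)
    have "\<not> dv 1 w"
    proof
      assume hw: "dv 1 w"
      have "u = (w + 2 * (v * x2)) - (x1 - x2 - u)" unfolding w_def by (simp add: algebra_simps)
      moreover have "dv 1 (2 * (v * x2))" using dv1_2[OF dv0_mul[OF v0 o(2)]] .
      ultimately have "dv 1 u" using dv_diff[OF dv_add[OF hw] d1] by metis
      thus False using unit_not_dv1[OF u] by simp
    qed
    thus ?thesis using unit_abs w0 by blast
  qed
  have main: "dv (k + 3) (Bq (tr (k + 1) x (a + b, b)) - u ^ 2) \<longleftrightarrow> dv 1 (\<gamma> + w * b)" if b: "dv 0 b" for b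
  proof -
    have eq: "Bq (tr (k + 1) x (a + b, b)) - u ^ 2 = 2 ^ (k + 2) * ((\<gamma> + w * b) + 2 * (Q * (a * b - v * b ^ 2)))"
      unfolding xe tr_def Bq_def p1 p2 \<gamma>_def w_def using iden[OF hyp, of a b] by (simp add: mult.assoc)
    have r: "dv 1 (2 * (Q * (a * b - v * b ^ 2)))" using Q0 a b v0
      by (intro dv1_2 dv0_mul dv_diff dv0_pow)
    have "dv (k + 3) (Bq (tr (k + 1) x (a + b, b)) - u ^ 2) \<longleftrightarrow> dv ((k + 2) + 1) (2 ^ (k + 2) * ((\<gamma> + w * b) + 2 * (Q * (a * b - v * b ^ 2))))"
      unfolding eq by (simp only: numeral_3_eq_3 numeral_2_eq_2 add_Suc_right add_0_right One_nat_def)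
    also have "\<dots> \<longleftrightarrow> dv 1 ((\<gamma> + w * b) + 2 * (Q * (a * b - v * b ^ 2)))" by (rule dv_2pow)
    also have "\<dots> \<longleftrightarrow> dv 1 (\<gamma> + w * b)"
    proof
      assume "dv 1 ((\<gamma> + w * b) + 2 * (Q * (a * b - v * b ^ 2)))"
      thus "dv 1 (\<gamma> + w * b)" using dv_diff[OF _ r] by fastforce
    qed (use r dv_add in blast)
    finally show ?thesis .
  qed
  show ?thesis using that[OF g0 w1 main] .
qed


lemma M_Sn: assumes u: "absv u = 1"
  shows "measure \<mu> (sc j (Ss u (k + 3))) = measure \<mu> (sc j (Ss u (k + 2))) / real q"
proof -
  have u0: "dv 0 u" using u unit_dv0 by blast
  have pA: "per (k + 1) (Ss u (k + 2))" using per_Ss[OF _ _ u0] by simp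
  have pC: "per (k + 3) (Ss u (k + 3))" using per_Ss[OF _ _ u0] by simp
  have CA: "Ss u (k + 3) \<subseteq> Ss u (k + 2)" using Ss_mono by simp
  define g where "g = (\<lambda>p::'a \<times> 'a. (fst p + snd p, snd p))"
  have "real (card (R \<times> R)) * measure \<mu> (sc j (Ss u (k + 3))) = real q * measure \<mu> (sc j (Ss u (k + 2)))"
  proof (rule avg_sc[OF pA pC CA RR_fin])
    fix i assume "i \<in> R \<times> R" thus "g i \<in> Om" unfolding Om_iff g_def using RO dv_add by auto
  next
    fix x assume xA: "x \<in> Ss u (k + 2)"
    have x: "x \<in> Om" and h: "dv (k + 2) (Bq x - u ^ 2)" using xA unfolding Ss_def by auto
    have o: "dv 0 (fst x)" "dv 0 (snd x)" using x unfolding Om_iff by auto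
    have "card {b \<in> R. tr (k + 1) x (g (a, b)) \<in> Ss u (k + 3)} = 1" if a: "a \<in> R" for a
    proof -
      obtain \<gamma> w where gw: "dv 0 \<gamma>" "absv w = 1"
        "\<And>b. dv 0 b \<Longrightarrow> dv (k + 3) (Bq (tr (k + 1) x (a + b, b)) - u ^ 2) \<longleftrightarrow> dv 1 (\<gamma> + w * b)"
        using step_core[OF x h u RO[OF a]] by blast
      have "{b \<in> R. tr (k + 1) x (g (a, b)) \<in> Ss u (k + 3)} = {b \<in> R. dv 1 (\<gamma> + w * b)}"
      proof (intro Collect_cong conj_cong refl)
        fix b assume b: "b \<in> R"
        have ab: "dv 0 (a + b)" using RO[OF a] RO[OF b] dv_add by blast
        have "dv 0 (fst x + 2 ^ (k + 1) * (a + b))" using dv_add[OF o(1) dv_mul0'[OF pow2_o ab]] .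
        moreover have "dv 0 (snd x + 2 ^ (k + 1) * b)" using dv_add[OF o(2) dv_mul0'[OF pow2_o RO[OF b]]] .
        ultimately have tO: "tr (k + 1) x (a + b, b) \<in> Om" unfolding tr_def Om_iff by simp
        show "tr (k + 1) x (g (a, b)) \<in> Ss u (k + 3) \<longleftrightarrow> dv 1 (\<gamma> + w * b)"
          unfolding g_def Ss_def using tO gw(3)[OF RO[OF b]] by simp
      qed
      thus ?thesis using R_unique[OF gw(2) gw(1)] by simp
    qed
    thus "card {i \<in> R \<times> R. tr (k + 1) x (g i) \<in> Ss u (k + 3)} = q"
      using card_each[of "\<lambda>a b. tr (k + 1) x (g (a, b)) \<in> Ss u (k + 3)"] by simp
  qed
  hence "real q * real q * measure \<mu> (sc j (Ss u (k + 3))) = real q * measure \<mu> (sc j (Ss u (k + 2)))"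
    using RR_card by simp
  thus ?thesis using q_ge2 by (simp add: field_simps)
qed

lemma M_Sn_all: assumes u: "absv u = 1"
  shows "measure \<mu> (sc j (Ss u (k + 2))) = 2 * c ^ (2 * j + (k + 2))"
proof (induction k)
  case 0 show ?case using M_S2[OF u, of j] by (simp add: numeral_2_eq_2)
next
  case (Suc k)
  have "measure \<mu> (sc j (Ss u (Suc k + 2))) = measure \<mu> (sc j (Ss u (k + 2))) / real q"
    using M_Sn[OF u, of j k] by (simp add: numeral_3_eq_3)
  also have "\<dots> = 2 * c ^ (2 * j + (k + 2)) * c" using Suc.IH unfolding c_def by simp
  finally show ?case by simp
qed

end

context dy begin
lemma ideal_iff: "z \<in> ideal_gen absv (2 ^ m) \<longleftrightarrow> dv m z"
proof
  assume "z \<in> ideal_gen absv (2 ^ m)"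
  then obtain y where "y \<in> int_ring absv" "z = 2 ^ m * y" unfolding ideal_gen_def by blast
  thus "dv m z" using dv_2pow0 dv_0_iff o_int by blast
next
  assume "dv m z"
  then obtain y where "dv 0 y" "z = 2 ^ m * y" using dv_ex by blast
  thus "z \<in> ideal_gen absv (2 ^ m)" unfolding ideal_gen_def o_int dv_0_iff[symmetric] by blast
qed
end

context dyR begin

lemma Xmeas: assumes t0: "dv 0 t" and tT: "absv t = c ^ T"
  shows "measure \<mu> (Ss t n) = c ^ n * (if n \<le> 2 * T + 1 then 1 else 2)"
proof -
  define u where "u = t / 2 ^ T"
  have cT: "c ^ T \<noteq> 0" using c_pos by simp
  have u1: "absv u = 1" unfolding u_def a_div a_pow2 tT using cT by simp
  have tu: "t = 2 ^ T * u" unfolding u_def by simp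
  show ?thesis
  proof (cases "n \<le> 2 * T + 1")
    case True
    define j where "j = n div 2"
    define r where "r = n mod 2"
    have nj: "n = r + 2 * j" unfolding j_def r_def by simp
    have jT: "j \<le> T" using True unfolding j_def by simp
    define \<sigma> where "\<sigma> = 2 ^ (T - j) * u"
    have s0: "dv 0 \<sigma>" unfolding \<sigma>_def using dv_mul0'[OF pow2_o unit_dv0[OF u1]] .
    have ts: "t = 2 ^ j * \<sigma>" unfolding tu \<sigma>_def using jT
      by (simp add: mult.assoc[symmetric] power_add[symmetric])
    have eq: "Ss t n = sc j (Ss \<sigma> r)" unfolding nj ts by (rule Ss_scale[OF s0])
    have "r = 0 \<or> r = 1" unfolding r_def by auto
    thus ?thesis
    proof
      assume r: "r = 0"
      have "measure \<mu> (Ss t n) = c ^ (2 * j)" unfolding eq r Ss0[OF s0] by (rule M_ball)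
      thus ?thesis using True nj r by simp
    next
      assume r: "r = 1"
      have "measure \<mu> (Ss t n) = c ^ (2 * j + 1)" unfolding eq r by (rule M_S1[OF s0])
      thus ?thesis using True nj r by simp
    qed
  next
    case False
    define k where "k = n - 2 * T - 2"
    have nk: "n = (k + 2) + 2 * T" unfolding k_def using False by simp
    have eq: "Ss t n = sc T (Ss u (k + 2))" unfolding nk tu by (rule Ss_scale[OF unit_dv0[OF u1]])
    have "measure \<mu> (Ss t n) = 2 * c ^ (2 * T + (k + 2))" unfolding eq by (rule M_Sn_all[OF u1])
    thus ?thesis using False nk by (simp add: add.commute)
  qed
qed

end

lemma series_final:
  fixes w z :: complex and cc :: real and X :: "nat \<Rightarrow> real" and N :: nat
  assumes w: "norm w < 1" and X: "\<And>l. X l = cc ^ (l + 1) * (if l \<le> N then 1 else 2)"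
    and wz: "w = z * of_real cc"
  shows "(\<lambda>l. z ^ l * of_real (X l)) sums (of_real cc * (1 + w ^ (N + 1)) / (1 - w))"
proof -
  define f where "f = (\<lambda>l. if N + 1 \<le> l then w ^ l else 0)"
  have g: "(\<lambda>l. w ^ l) sums (1 / (1 - w))" using geometric_sums[OF w] .
  have "(\<lambda>i. f (i + (N + 1))) sums (w ^ (N + 1) * (1 / (1 - w)))"
    unfolding f_def using sums_mult[OF g, of "w ^ (N + 1)"] by (simp add: power_add mult_ac)
  hence f: "f sums (w ^ (N + 1) * (1 / (1 - w)))"
    using sums_iff_shift[of f "N + 1"] unfolding f_def by simp
  have s: "(\<lambda>l. of_real cc * (w ^ l + f l)) sums (of_real cc * (1 / (1 - w) + w ^ (N + 1) * (1 / (1 - w))))"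
    using sums_mult[OF sums_add[OF g f]] .
  have t: "z ^ l * of_real (X l) = of_real cc * (w ^ l + f l)" for l
    unfolding X wz f_def by (auto simp: power_mult_distrib algebra_simps)
  have w1: "1 - w \<noteq> 0" using w by auto
  have "of_real cc * (1 / (1 - w) + w ^ (N + 1) * (1 / (1 - w))) = of_real cc * (1 + w ^ (N + 1)) / (1 - w)"
    using w1 by (simp add: field_simps)
  thus ?thesis using s t by simp
qed


theorem proposition6p6:
  fixes absv :: "'a::field \<Rightarrow> real" and q :: nat and \<mu> :: "('a \<times> 'a) measure"
    and v \<Delta> t :: 'a and T :: nat and \<beta> :: complex
  assumes k: "unram_dyadic_local_field absv q"
    and haar: "haar_prob_o2 absv \<mu>"
    and v_unit: "absv v = 1"
    and Delta: "\<Delta> = 1 + 2 * v"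
    and Delta_unit: "absv \<Delta> = 1"
    and Delta_defect: "quad_defect absv \<Delta> = ideal_gen absv 2"
    and t_int: "t \<in> int_ring absv" and t_nz: "t \<noteq> 0"
    and t_abs: "absv t = (1 / real q) ^ T"
    and beta: "Re \<beta> > 0"
  shows "(\<lambda>l. (of_real (real q) powr (- \<beta>)) ^ l *
              complex_of_real (X_l absv \<mu> (\<lambda>x. fst x ^ 2 - \<Delta> * snd x ^ 2) (t ^ 2) l))
         sums (complex_of_real (absv 2) *
               (1 + (of_real (real q) powr (- \<beta>) / of_real (real q)) ^ (2 * T + 1)) /
               (1 - of_real (real q) powr (- \<beta>) / of_real (real q)))"
proof -
  interpret dy absv q \<mu> v using k haar v_unit by unfold_locales
  obtain R where R: "finite R" "card R = q" "R \<subseteq> Oi" "\<forall>x\<in>Oi. \<exists>r\<in>R. dv 1 (x - r)"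
    "\<forall>r\<in>R. \<forall>r'\<in>R. dv 1 (r - r') \<longrightarrow> r = r'" using resid by blast
  interpret dyR absv q \<mu> v R using R by unfold_locales auto
  have t0: "dv 0 t" using t_int o_int dv_0_iff by simp
  have tT: "absv t = c ^ T" using t_abs unfolding c_def .
  have XX: "X_l absv \<mu> (\<lambda>x. fst x ^ 2 - \<Delta> * snd x ^ 2) (t ^ 2) l = c ^ (l + 1) * (if l \<le> 2 * T then 1 else 2)" for l
  proof -
    have "{x \<in> int_ring absv \<times> int_ring absv. fst x ^ 2 - \<Delta> * snd x ^ 2 - t ^ 2 \<in> ideal_gen absv (2 ^ (l + 1))}
        = Ss t (l + 1)" unfolding Ss_def Om_o ideal_iff Bq_def Delta ..
    hence "X_l absv \<mu> (\<lambda>x. fst x ^ 2 - \<Delta> * snd x ^ 2) (t ^ 2) l = measure \<mu> (Ss t (l + 1))"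
      unfolding X_l_def by simp
    also have "\<dots> = c ^ (l + 1) * (if l + 1 \<le> 2 * T + 1 then 1 else 2)" by (rule Xmeas[OF t0 tT])
    finally show ?thesis by simp
  qed
  define z :: complex where "z = of_real (real q) powr (- \<beta>)"
  define w :: complex where "w = z / of_real (real q)"
  have q1: "real q > 1" using q_ge2 by simp
  have nz: "norm z = real q powr (- Re \<beta>)" unfolding z_def
    by (subst norm_powr_real_powr) auto
  have "real q powr (- Re \<beta>) < real q powr 0" using q1 beta by (intro powr_less_mono) auto
  hence nz1: "norm z < 1" using nz q1 by (simp split: if_splits)
  have "norm w = norm z / real q" unfolding w_def by (simp add: norm_divide)
  hence wn: "norm w < 1" using nz1 q1 by (simp add: divide_less_eq)
  have wz: "w = z * of_real c" unfolding w_def c_def by (simp add: divide_inverse)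
  have "(\<lambda>l. z ^ l * of_real (X_l absv \<mu> (\<lambda>x. fst x ^ 2 - \<Delta> * snd x ^ 2) (t ^ 2) l))
      sums (of_real c * (1 + w ^ (2 * T + 1)) / (1 - w))"
    by (rule series_final[OF wn XX wz])
  thus ?thesis unfolding z_def[symmetric] w_def[symmetric] a_2 .
qed

end
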